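(* The chaotic relaxation for the system $\mathbf{Lx}=\mathbf{b}$ defined by the splitting $\mathbf{D + \tilde{L}}$, with $\mathbf{D}$ nonsingular block diagonal and $\mathbf{\tilde{L}}$ strictly lower block triangular, converges.
   Context: Let $\mathbf{L}\in\mathbb{R}^{n\times n}$ be lower block triangular with square $b\times b$ blocks ($n$ divisible by $b$) and nonsingular diagonal blocks, split as $\mathbf{L}=\mathbf{D}+\tilde{\mathbf{L}}$ with $\mathbf{D}$ its block diagonal part and $\tilde{\mathbf{L}}$ its strictly lower block triangular part. For a splitting $\mathbf{L}=\mathbf{M}+\mathbf{N}$ (here $\mathbf{M}=\mathbf{D}$, $\mathbf{N}=\tilde{\mathbf{L}}$), set $\mathbf{B}:=-\mathbf{M}^{-1}\mathbf{N}$ and $\mathbf{C}:=\mathbf{M}^{-1}$ with rows $\mathbf{c}_i^T$. The chaotic relaxation (Chazan–Miranker) is the iteration $x_i^{j+1}=x_i^j$ if $i\neq u(j)$ and $x_i^{j+1}=\sum_{\alpha=1}^n B_{i\alpha}x_\alpha^{j-s_\alpha(j)}+\mathbf{c}_i^T\mathbf{b}$ if $i=u(j)$, where the shift functions $s_\alpha:\mathbb{N}\to\mathbb{N}$ satisfy $0\le s_\alpha(j)\le\min\{j-1,\hat s\}$ for some fixed $\hat s$, and the update function $u:\mathbb{N}\to\{1,\dots,n\}$ is such that for every $i$ and every $j$ there is $l>j$ with $u(l)=i$. Chazan–Miranker's theorem: such a scheme converges if $\rho(|\mathbf{B}|)<1$. *)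

theory Defs
  imports "HOL-Analysis.Analysis" "Jordan_Normal_Form.Matrix" "Jordan_Normal_Form.Determinant"
    "Jordan_Normal_Form.Gauss_Jordan_Elimination"
begin

text \<open>Block structure with square blocks of size bs (0-based indices; index i lies in block i div bs).\<close>

definition lower_block_triangular :: "nat \<Rightarrow> nat \<Rightarrow> real mat \<Rightarrow> bool" where
  "lower_block_triangular n bs L \<longleftrightarrow> L \<in> carrier_mat n n \<and>
     (\<forall>i<n. \<forall>j<n. i div bs < j div bs \<longrightarrow> L $$ (i,j) = 0)"

definition diag_block :: "nat \<Rightarrow> real mat \<Rightarrow> nat \<Rightarrow> real mat" where
  "diag_block bs L p = mat bs bs (\<lambda>(i,j). L $$ (p*bs+i, p*bs+j))"

definition block_diag_part :: "nat \<Rightarrow> nat \<Rightarrow> real mat \<Rightarrow> real mat" where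
  "block_diag_part n bs L = mat n n (\<lambda>(i,j). if i div bs = j div bs then L $$ (i,j) else 0)"

definition strictly_lower_block_part :: "nat \<Rightarrow> nat \<Rightarrow> real mat \<Rightarrow> real mat" where
  "strictly_lower_block_part n bs L = L - block_diag_part n bs L"

text \<open>Chaotic relaxation (Chazan--Miranker) for the splitting L = M + N, with B = -M^{-1}N, C = M^{-1}.
  Iterates x j for j >= 1; x 1 is the arbitrary initial vector.\<close>

definition chaotic_relaxation ::
  "nat \<Rightarrow> real mat \<Rightarrow> real mat \<Rightarrow> real vec \<Rightarrow> (nat \<Rightarrow> nat) \<Rightarrow> (nat \<Rightarrow> nat \<Rightarrow> nat) \<Rightarrow> nat
     \<Rightarrow> (nat \<Rightarrow> real vec) \<Rightarrow> bool" where
  "chaotic_relaxation n M N b u s shat x \<longleftrightarrow>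
     (let Minv = the (mat_inverse M); B = - (Minv * N); C = Minv in
     (\<forall>j\<ge>1. \<forall>\<alpha><n. s \<alpha> j \<le> min (j - 1) shat) \<and>
     (\<forall>j\<ge>1. u j \<in> {0..<n}) \<and>
     (\<forall>i<n. \<forall>j\<ge>1. \<exists>l>j. u l = i) \<and>
     (\<forall>j\<ge>1. dim_vec (x j) = n) \<and>
     (\<forall>j\<ge>1. \<forall>i<n.
        x (j+1) $ i = (if i \<noteq> u j then x j $ i
                       else (\<Sum>\<alpha><n. B $$ (i,\<alpha>) * x (j - s \<alpha> j) $ \<alpha>) + row C i \<bullet> b)))"

end

theory Submission
  imports Defs
begin

lemma block_sum:
  fixes f :: "nat \<Rightarrow> 'a::comm_monoid_add"
  assumes "bs > 0" "bs dvd n" "p < n div bs" "\<forall>j<n. j div bs \<noteq> p \<longrightarrow> f j = 0"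
  shows "(\<Sum>j\<in>{0..<n}. f j) = (\<Sum>k\<in>{0..<bs}. f (p*bs+k))"
proof -
  have sub: "(\<lambda>k. p*bs+k) ` {0..<bs} \<subseteq> {0..<n}"
  proof
    fix j assume "j \<in> (\<lambda>k. p*bs+k) ` {0..<bs}"
    then obtain k where k: "k < bs" "j = p*bs+k" by (meson atLeastLessThan_iff imageE)
    have "Suc p \<le> n div bs" using assms(3) by simp
    hence "Suc p * bs \<le> n div bs * bs" by (rule mult_le_mono1)
    also have "\<dots> = n" using assms(2) by simp
    finally show "j \<in> {0..<n}" using k by simp
  qed
  have Z: "\<forall>i\<in>{0..<n} - (\<lambda>k. p * bs + k) ` {0..<bs}. f i = 0"
  proof
    fix j assume j: "j \<in> {0..<n} - (\<lambda>k. p * bs + k) ` {0..<bs}"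
    have "j div bs \<noteq> p"
    proof
      assume "j div bs = p"
      hence "j = p*bs + j mod bs" by (metis mult.commute div_mult_mod_eq)
      moreover have "j mod bs < bs" using assms(1) by simp
      ultimately show False using j by (metis DiffD2 atLeastLessThan_iff image_eqI zero_le)
    qed
    thus "f j = 0" using assms(4) j by auto
  qed
  have "(\<Sum>j\<in>{0..<n}. f j) = (\<Sum>j\<in>(\<lambda>k. p*bs+k) ` {0..<bs}. f j)"
    by (rule sum.mono_neutral_right[OF _ sub Z]) simp
  also have "\<dots> = (\<Sum>k\<in>{0..<bs}. f (p*bs+k))" by (subst sum.reindex) (auto simp: inj_on_def)
  finally show ?thesis .
qed

lemma diag_right:
  fixes A :: "real mat"
  assumes "A \<in> carrier_mat n n" "i < n" "j < n"
  shows "(A * mat n n (\<lambda>(a,c). if a = c then d a else 0)) $$ (i,j) = A $$ (i,j) * d j"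
proof -
  have "(A * mat n n (\<lambda>(a,c). if a = c then d a else 0)) $$ (i,j)
     = (\<Sum>k\<in>{0..<n}. A $$ (i,k) * (if k = j then d k else 0))"
    using assms by (simp add: scalar_prod_def)
  also have "\<dots> = (\<Sum>k\<in>{0..<n}. if k = j then A $$ (i,j) * d j else 0)"
    by (rule sum.cong) auto
  also have "\<dots> = A $$ (i,j) * d j" using assms by simp
  finally show ?thesis .
qed

lemma diag_left:
  fixes A :: "real mat"
  assumes "A \<in> carrier_mat n n" "i < n" "j < n"
  shows "(mat n n (\<lambda>(a,c). if a = c then d a else 0) * A) $$ (i,j) = d i * A $$ (i,j)"
proof -
  have "(mat n n (\<lambda>(a,c). if a = c then d a else 0) * A) $$ (i,j)
     = (\<Sum>k\<in>{0..<n}. (if i = k then d i else 0) * A $$ (k,j))"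
    using assms by (simp add: scalar_prod_def)
  also have "\<dots> = (\<Sum>k\<in>{0..<n}. if k = i then d i * A $$ (i,j) else 0)"
    by (rule sum.cong) auto
  also have "\<dots> = d i * A $$ (i,j)" using assms by simp
  finally show ?thesis .
qed

theorem theorem2:
  fixes n bs shat :: nat and L :: "real mat" and b :: "real vec"
    and u :: "nat \<Rightarrow> nat" and s :: "nat \<Rightarrow> nat \<Rightarrow> nat" and x :: "nat \<Rightarrow> real vec"
  assumes "bs > 0" and "bs dvd n"
    and "lower_block_triangular n bs L"
    and "\<forall>p < n div bs. det (diag_block bs L p) \<noteq> 0"
    and "b \<in> carrier_vec n"
    and "chaotic_relaxation n (block_diag_part n bs L) (strictly_lower_block_part n bs L) b u s shat x"
  shows "\<exists>xs \<in> carrier_vec n. L *\<^sub>v xs = b \<and> (\<forall>i<n. (\<lambda>j. x j $ i) \<longlonglongrightarrow> xs $ i)"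
proof -
  define M where "M = block_diag_part n bs L"
  define N where "N = strictly_lower_block_part n bs L"
  have Lc: "L \<in> carrier_mat n n" and Lz: "\<And>i j. i<n \<Longrightarrow> j<n \<Longrightarrow> i div bs < j div bs \<Longrightarrow> L $$ (i,j) = 0"
    using assms(3) unfolding lower_block_triangular_def by auto
  have Mc: "M \<in> carrier_mat n n" unfolding M_def block_diag_part_def by simp
  have Me: "\<And>i j. i<n \<Longrightarrow> j<n \<Longrightarrow> M $$ (i,j) = (if i div bs = j div bs then L $$ (i,j) else 0)"
    unfolding M_def block_diag_part_def by simp
  have Nc: "N \<in> carrier_mat n n" using Lc Mc unfolding N_def M_def[symmetric] strictly_lower_block_part_def by (simp add: minus_carrier_mat)
  have Ne: "\<And>i j. i<n \<Longrightarrow> j<n \<Longrightarrow> N $$ (i,j) = L $$ (i,j) - M $$ (i,j)"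
    using Lc Mc unfolding N_def M_def[symmetric] strictly_lower_block_part_def by simp
  have Nz: "\<And>i j. i<n \<Longrightarrow> j<n \<Longrightarrow> N $$ (i,j) \<noteq> 0 \<Longrightarrow> j div bs < i div bs"
  proof -
    fix i j assume ij: "i<n" "j<n" "N $$ (i,j) \<noteq> 0"
    show "j div bs < i div bs"
    proof (rule ccontr)
      assume "\<not> j div bs < i div bs"
      hence "i div bs = j div bs \<or> i div bs < j div bs" by auto
      thus False using ij Ne Me Lz by (cases "i div bs = j div bs") auto
    qed
  qed
  have LMN: "L = M + N"
    by (rule eq_matI) (use Lc Mc Nc Ne in auto)
  have dM: "det M \<noteq> 0"
  proof
    assume "det M = 0"
    then obtain v where v: "v \<in> carrier_vec n" "v \<noteq> 0\<^sub>v n" "M *\<^sub>v v = 0\<^sub>v n"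
      using det_0_iff_vec_prod_zero[OF Mc] by blast
    obtain i where i: "i < n" "v $ i \<noteq> 0"
      using v(1,2) by (metis eq_vecI carrier_vecD index_zero_vec(1,2))
    define p where "p = i div bs"
    have nn: "n = n div bs * bs" using assms(2) by simp
    have pl: "p < n div bs" unfolding p_def using i(1) assms(1) nn
      by (metis less_mult_imp_div_less)
    define w where "w = vec bs (\<lambda>k. v $ (p*bs+k))"
    have wc: "w \<in> carrier_vec bs" unfolding w_def by simp
    have im: "p*bs + i mod bs = i" unfolding p_def by (metis mult.commute div_mult_mod_eq)
    have wne: "w \<noteq> 0\<^sub>v bs"
    proof
      assume "w = 0\<^sub>v bs"
      hence "w $ (i mod bs) = 0" using assms(1) by simp
      thus False using i(2) im assms(1) unfolding w_def by simp
    qed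
    have Dc: "diag_block bs L p \<in> carrier_mat bs bs" unfolding diag_block_def by simp
    have rng: "\<And>k. k < bs \<Longrightarrow> p*bs + k < n"
    proof -
      fix k assume "k < bs"
      have "Suc p \<le> n div bs" using pl by simp
      hence "Suc p * bs \<le> n div bs * bs" by (rule mult_le_mono1)
      thus "p*bs + k < n" using \<open>k < bs\<close> nn by simp
    qed
    have "diag_block bs L p *\<^sub>v w = 0\<^sub>v bs"
    proof (rule eq_vecI)
      fix k assume k: "k < dim_vec (0\<^sub>v bs :: real vec)"
      hence k': "k < bs" by simp
      have kdiv: "(p*bs+k) div bs = p" using k' assms(1) by simp
      have "(M *\<^sub>v v) $ (p*bs+k) = (\<Sum>j\<in>{0..<n}. M $$ (p*bs+k, j) * v $ j)"
        using rng[OF k'] Mc v(1) by (simp add: scalar_prod_def)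
      also have "\<dots> = (\<Sum>k'\<in>{0..<bs}. M $$ (p*bs+k, p*bs+k') * v $ (p*bs+k'))"
        by (rule block_sum[OF assms(1,2) pl]) (use Me rng[OF k'] kdiv in auto)
      also have "\<dots> = (\<Sum>k'\<in>{0..<bs}. L $$ (p*bs+k, p*bs+k') * v $ (p*bs+k'))"
        by (rule sum.cong) (use Me rng k' assms(1) in auto)
      also have "\<dots> = (diag_block bs L p *\<^sub>v w) $ k"
        using k' unfolding diag_block_def w_def by (simp add: scalar_prod_def)
      finally show "(diag_block bs L p *\<^sub>v w) $ k = 0\<^sub>v bs $ k"
        using v(3) rng[OF k'] k' by simp
    qed (simp add: diag_block_def)
    hence "det (diag_block bs L p) = 0"
      using det_0_iff_vec_prod_zero[OF Dc] wc wne by blast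
    thus False using assms(4) pl by blast
  qed
  have "mat_inverse M \<noteq> None"
    by (metis mat_inverse(1)[OF Mc] det_non_zero_imp_unit[OF Mc dM])
  then obtain Minv where Mi: "mat_inverse M = Some Minv" by blast
  have MMi: "M * Minv = 1\<^sub>m n" and MiM: "Minv * M = 1\<^sub>m n" and Mic: "Minv \<in> carrier_mat n n"
    using mat_inverse(2)[OF Mc Mi] by auto
  have Miz: "\<And>i k. i<n \<Longrightarrow> k<n \<Longrightarrow> i div bs \<noteq> k div bs \<Longrightarrow> Minv $$ (i,k) = 0"
  proof -
    fix i k assume ik: "i<n" "k<n" "i div bs \<noteq> k div bs"
    define d where "d = (\<lambda>a::nat. if a div bs = i div bs then (1::real) else 0)"
    define P where "P = mat n n (\<lambda>(a,c). if a = c then d a else 0)"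
    have Pc: "P \<in> carrier_mat n n" unfolding P_def by simp
    have PM: "P * M = M * P"
    proof (rule eq_matI)
      fix a c assume ac: "a < dim_row (M * P)" "c < dim_col (M * P)"
      hence a: "a < n" "c < n" using Mc Pc by auto
      show "(P * M) $$ (a,c) = (M * P) $$ (a,c)"
        unfolding P_def using diag_left[OF Mc a] diag_right[OF Mc a] Me[OF a]
        by (simp add: d_def)
    qed (use Mc Pc in auto)
    have "Minv * P = Minv * P * (M * Minv)" using MMi Mic Pc by simp
    also have "\<dots> = Minv * (P * M) * Minv" using Mic Pc Mc by (simp add: assoc_mult_mat[of _ n n _ n _ n])
    also have "\<dots> = Minv * (M * P) * Minv" using PM by simp
    also have "\<dots> = (Minv * M) * P * Minv" using Mic Pc Mc by (simp add: assoc_mult_mat[of _ n n _ n _ n])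
    also have "\<dots> = P * Minv" using MiM Pc by simp
    finally have "(Minv * P) $$ (i,k) = (P * Minv) $$ (i,k)" by simp
    thus "Minv $$ (i,k) = 0"
      unfolding P_def using diag_left[OF Mic ik(1,2)] diag_right[OF Mic ik(1,2)] ik(3)
      by (simp add: d_def)
  qed
  define B where "B = - (Minv * N)"
  have Bc: "B \<in> carrier_mat n n" unfolding B_def using Mic Nc by simp
  have Bz: "\<And>i a. i<n \<Longrightarrow> a<n \<Longrightarrow> B $$ (i,a) \<noteq> 0 \<Longrightarrow> a div bs < i div bs"
  proof -
    fix i a assume ia: "i<n" "a<n" "B $$ (i,a) \<noteq> 0"
    have "B $$ (i,a) = - (\<Sum>k\<in>{0..<n}. Minv $$ (i,k) * N $$ (k,a))"
      unfolding B_def using ia Mic Nc by (simp add: scalar_prod_def)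
    with ia(3) obtain k where k: "k < n" "Minv $$ (i,k) * N $$ (k,a) \<noteq> 0"
      by (metis (no_types, lifting) atLeastLessThan_iff neg_equal_0_iff_equal sum.neutral)
    hence "Minv $$ (i,k) \<noteq> 0" "N $$ (k,a) \<noteq> 0" by auto
    thus "a div bs < i div bs" using Miz[OF ia(1) k(1)] Nz[OF k(1) ia(2)] by metis
  qed
  have cr: "(\<forall>j\<ge>1. \<forall>\<alpha><n. s \<alpha> j \<le> min (j - 1) shat) \<and>
     (\<forall>i<n. \<forall>j\<ge>1. \<exists>l>j. u l = i) \<and>
     (\<forall>j\<ge>1. \<forall>i<n.
        x (j+1) $ i = (if i \<noteq> u j then x j $ i
                       else (\<Sum>\<alpha><n. B $$ (i,\<alpha>) * x (j - s \<alpha> j) $ \<alpha>) + row Minv i \<bullet> b))"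
    using assms(6) Mi unfolding chaotic_relaxation_def Let_def M_def[symmetric] N_def[symmetric] B_def
    by simp
  have sb: "\<And>j a. j \<ge> 1 \<Longrightarrow> a < n \<Longrightarrow> s a j \<le> shat" using cr by fastforce
  have uex: "\<And>i j. i < n \<Longrightarrow> j \<ge> 1 \<Longrightarrow> \<exists>l>j. u l = i" using cr by blast
  have upd: "\<And>j i. j \<ge> 1 \<Longrightarrow> i < n \<Longrightarrow> x (j+1) $ i = (if i \<noteq> u j then x j $ i
                       else (\<Sum>\<alpha><n. B $$ (i,\<alpha>) * x (j - s \<alpha> j) $ \<alpha>) + row Minv i \<bullet> b)"
    using cr by blast
  (* eventual constancy, by induction over the block index *)
  have blk: "\<And>i. i < n \<Longrightarrow> i div bs = p \<Longrightarrow> \<exists>c. eventually (\<lambda>j. x j $ i = c) sequentially" for p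
  proof (induction p rule: less_induct)
    case (less p)
    fix i assume i: "i < n" "i div bs = p"
    have "\<forall>a. \<exists>c. a < n \<and> a div bs < p \<longrightarrow> eventually (\<lambda>j. x j $ a = c) sequentially"
      using less.IH by blast
    then obtain cf where cf: "\<And>a. a < n \<Longrightarrow> a div bs < p \<Longrightarrow> eventually (\<lambda>j. x j $ a = cf a) sequentially"
      by metis
    have "eventually (\<lambda>j. \<forall>a\<in>{a. a < n \<and> a div bs < p}. x j $ a = cf a) sequentially"
      by (rule eventually_ball_finite) (use cf in auto)
    then obtain T where T: "\<And>j a. j \<ge> T \<Longrightarrow> a < n \<Longrightarrow> a div bs < p \<Longrightarrow> x j $ a = cf a"
      unfolding eventually_sequentially by blast
    define v where "v = (\<Sum>a<n. B $$ (i,a) * cf a) + row Minv i \<bullet> b"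
    have key: "\<And>j. j \<ge> T + shat + 1 \<Longrightarrow> u j = i \<Longrightarrow> x (j+1) $ i = v"
    proof -
      fix j assume j: "j \<ge> T + shat + 1" "u j = i"
      have "x (j+1) $ i = (\<Sum>a<n. B $$ (i,a) * x (j - s a j) $ a) + row Minv i \<bullet> b"
        using upd[of j i] j i by simp
      also have "(\<Sum>a<n. B $$ (i,a) * x (j - s a j) $ a) = (\<Sum>a<n. B $$ (i,a) * cf a)"
      proof (rule sum.cong)
        fix a assume a: "a \<in> {..<n}"
        show "B $$ (i,a) * x (j - s a j) $ a = B $$ (i,a) * cf a"
        proof (cases "B $$ (i,a) = 0")
          case False
          hence "a div bs < p" using Bz[of i a] a i by auto
          moreover have "j - s a j \<ge> T" using sb[of j a] j a by auto
          ultimately show ?thesis using T a by auto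
        qed simp
      qed simp
      finally show "x (j+1) $ i = v" unfolding v_def .
    qed
    obtain l where l: "l > T + shat + 1" "u l = i" using uex[of i "T + shat + 1"] i by auto
    have "x j $ i = v" if "j \<ge> l + 1" for j
      using that
    proof (induction j rule: dec_induct)
      case base
      show ?case using key l by simp
    next
      case (step j)
      show ?case
      proof (cases "u j = i")
        case True
        thus ?thesis using key[of j] step l by simp
      next
        case False
        thus ?thesis using upd[of j i] step i by simp
      qed
    qed
    hence "eventually (\<lambda>j. x j $ i = v) sequentially"
      unfolding eventually_sequentially by blast
    thus "\<exists>c. eventually (\<lambda>j. x j $ i = c) sequentially" by blast
  qed
  have "\<forall>i. \<exists>c. i < n \<longrightarrow> eventually (\<lambda>j. x j $ i = c) sequentially"
    using blk by blast
  then obtain cf where cf: "\<And>i. i < n \<Longrightarrow> eventually (\<lambda>j. x j $ i = cf i) sequentially"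
    by metis
  define xs where "xs = vec n cf"
  have xsc: "xs \<in> carrier_vec n" unfolding xs_def by simp
  have lim: "\<forall>i<n. (\<lambda>j. x j $ i) \<longlonglongrightarrow> xs $ i"
  proof (intro allI impI)
    fix i assume i: "i < n"
    show "(\<lambda>j. x j $ i) \<longlonglongrightarrow> xs $ i"
      using tendsto_eventually[OF cf[OF i]] i unfolding xs_def by simp
  qed
  have "eventually (\<lambda>j. \<forall>i\<in>{..<n}. x j $ i = cf i) sequentially"
    by (rule eventually_ball_finite) (use cf in auto)
  then obtain T where T: "\<And>j i. j \<ge> T \<Longrightarrow> i < n \<Longrightarrow> x j $ i = cf i"
    unfolding eventually_sequentially by blast
  have fix_pt: "xs = B *\<^sub>v xs + Minv *\<^sub>v b"
  proof (rule eq_vecI)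
    fix i assume "i < dim_vec (B *\<^sub>v xs + Minv *\<^sub>v b)"
    hence i: "i < n" using Bc Mic by simp
    obtain l where l: "l > T + shat + 1" "u l = i" using uex[of i "T + shat + 1"] i by auto
    have "cf i = x (l+1) $ i" using T[of "l+1" i] l i by simp
    also have "\<dots> = (\<Sum>a<n. B $$ (i,a) * x (l - s a l) $ a) + row Minv i \<bullet> b"
      using upd[of l i] l i by simp
    also have "(\<Sum>a<n. B $$ (i,a) * x (l - s a l) $ a) = (\<Sum>a<n. B $$ (i,a) * cf a)"
    proof (rule sum.cong)
      fix a assume a: "a \<in> {..<n}"
      have "l - s a l \<ge> T" using sb[of l a] l a by auto
      thus "B $$ (i,a) * x (l - s a l) $ a = B $$ (i,a) * cf a" using T a by auto
    qed simp
    also have "(\<Sum>a<n. B $$ (i,a) * cf a) = (B *\<^sub>v xs) $ i"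
      using i Bc unfolding xs_def by (simp add: scalar_prod_def lessThan_atLeast0)
    finally show "xs $ i = (B *\<^sub>v xs + Minv *\<^sub>v b) $ i"
      using i Bc Mic unfolding xs_def by simp
  qed (use Bc Mic assms(5) xsc in simp)
  define y where "y = N *\<^sub>v xs"
  have yc: "y \<in> carrier_vec n" unfolding y_def using Nc xsc by (rule mult_mat_vec_carrier)
  have "B *\<^sub>v xs = - (Minv *\<^sub>v y)"
    unfolding B_def y_def using Mic Nc xsc by simp
  hence xa: "xs = - (Minv *\<^sub>v y) + Minv *\<^sub>v b" using fix_pt by simp
  have e1: "Minv *\<^sub>v (b - y) = Minv *\<^sub>v b - Minv *\<^sub>v y"
    by (rule mult_minus_distrib_mat_vec[OF Mic assms(5) yc])
  have xs2: "xs = Minv *\<^sub>v (b - y)"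
    unfolding e1 by (subst xa, rule eq_vecI) (use Mic in auto)
  have "M *\<^sub>v xs = b - y"
    unfolding xs2 using assoc_mult_mat_vec[OF Mc Mic, of "b - y", symmetric] MMi assms(5) yc by simp
  hence "L *\<^sub>v xs = (b - y) + y"
    unfolding LMN y_def using add_mult_distrib_mat_vec[OF Mc Nc xsc] by simp
  also have "\<dots> = b" using assms(5) yc by auto
  finally show ?thesis using xsc lim by blast
qed

end
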